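(* Let $A\subseteq[0,1]^d$ be an up-closed $0/1$-polytope and $B\subseteq[0,1]^d$ a convex set with $A\subseteq B$ and $d':=\dim(A)=\dim(B)$. If $d'=1$, then $A=B$. Otherwise, (i) $\operatorname{rdist}(A,B)\geq\frac{1}{d'-1}\cdot\frac{\operatorname{LPgapMin}(A,B)}{1+\operatorname{LPgapMin}(A,B)}$, and (ii) $\operatorname{LPgapMin}(A,B)\geq\frac{\operatorname{rdist}(A,B)}{d'-1-\operatorname{rdist}(A,B)}$.
   Context: A $0/1$-polytope $P\subseteq[0,1]^d$ (all vertices in $\{0,1\}^d$) is up-closed if $x\in P$, $y\in[0,1]^d$, $x\leq y$ imply $y\in P$. $\operatorname{LPgapMin}(A,B)=\inf\{\varepsilon\geq0: \inf_{a\in A}c^\intercal a\leq(1+\varepsilon)\inf_{b\in B}c^\intercal b\ \ \forall c\in\mathbb{R}^d_{\geq0}\}$. For nonempty convex $A\subseteq B\subseteq\mathbb{R}^d$, $\operatorname{rdist}(A,B)=\sup_{\pi}\frac{\sup_{b\in B}\inf_{a\in A}|\pi(b)-\pi(a)|}{\sup_{a,a'\in A}|\pi(a)-\pi(a')|}$ over all linear $\pi:\mathbb{R}^d\to\mathbb{R}$, with fractions having denominator $\infty$ and $0/0$ interpreted as $0$. *)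

theory Defs
  imports "HOL-Analysis.Analysis" "HOL-Library.Extended_Real"
begin

text \<open>The unit cube [0,1]^d, with d the (arbitrary, fixed) cardinality of the index type 'n.\<close>
definition unit_cube :: "(real^'n) set" where
  "unit_cube = {x. \<forall>i. 0 \<le> x$i \<and> x$i \<le> 1}"

definition zero_one_polytope :: "(real^'n) set \<Rightarrow> bool" where
  "zero_one_polytope P \<longleftrightarrow>
     (\<exists>V. V \<noteq> {} \<and> V \<subseteq> {x. \<forall>i. x$i = 0 \<or> x$i = 1} \<and> P = convex hull V)"

definition up_closed :: "(real^'n) set \<Rightarrow> bool" where
  "up_closed P \<longleftrightarrow>
     (\<forall>x\<in>P. \<forall>y\<in>unit_cube. (\<forall>i. x$i \<le> y$i) \<longrightarrow> y \<in> P)"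

text \<open>LPgapMin, valued in the extended reals (infimum of the empty set is \<infinity>).\<close>
definition LPgapMin :: "(real^'n) set \<Rightarrow> (real^'n) set \<Rightarrow> ereal" where
  "LPgapMin A B = Inf {ereal e | e. e \<ge> 0 \<and>
      (\<forall>c::real^'n. (\<forall>i. 0 \<le> c$i) \<longrightarrow>
         Inf ((\<lambda>a. c \<bullet> a) ` A) \<le> (1 + e) * Inf ((\<lambda>b. c \<bullet> b) ` B))}"

definition rfrac :: "ereal \<Rightarrow> ereal \<Rightarrow> ereal" where
  "rfrac num den = (if den = \<infinity> then 0 else if den = 0 then (if num = 0 then 0 else \<infinity>)
                    else num / den)"

definition rdist :: "(real^'n) set \<Rightarrow> (real^'n) set \<Rightarrow> ereal" where
  "rdist A B = (SUP \<pi> \<in> {\<pi> :: real^'n \<Rightarrow> real. linear \<pi>}.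
      rfrac (SUP b\<in>B. INF a\<in>A. ereal \<bar>\<pi> b - \<pi> a\<bar>)
            (SUP a\<in>A. SUP a'\<in>A. ereal \<bar>\<pi> a - \<pi> a'\<bar>))"

end

theory Submission
  imports Defs
begin

definition ones :: "real^'n" where "ones = (\<chi> i. 1)"
definition ev :: "'n \<Rightarrow> real^'n" where "ev i = (\<chi> j. if j = i then 0 else 1)"

lemma linear_rep:
  fixes f :: "real^'n \<Rightarrow> real" assumes "linear f"
  shows "f x = (\<chi> i. f (axis i 1)) \<bullet> x"
proof -
  have "f x = f (\<Sum>i\<in>UNIV. x$i *s axis i 1)" by (simp add: basis_expansion)
  also have "\<dots> = (\<Sum>i\<in>UNIV. x$i * f (axis i 1))"
    using assms by (simp add: linear_sum linear_cmul scalar_mult_eq_scaleR)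
  also have "\<dots> = (\<chi> i. f (axis i 1)) \<bullet> x" by (simp add: inner_vec_def mult.commute)
  finally show ?thesis .
qed

lemma linear_inner: "linear (\<lambda>x. (c::real^'n) \<bullet> x)"
  by (rule bounded_linear.linear[OF bounded_linear_inner_right])

lemma rfrac_nonneg: "0 \<le> N \<Longrightarrow> 0 \<le> W \<Longrightarrow> 0 \<le> rfrac N W"
  unfolding rfrac_def by (auto intro: zero_le_divide_ereal)

lemma rdist_ge:
  assumes "linear \<pi>"
  shows "rfrac (SUP b\<in>B. INF a\<in>A. ereal \<bar>\<pi> b - \<pi> a\<bar>) (SUP a\<in>A. SUP a'\<in>A. ereal \<bar>\<pi> a - \<pi> a'\<bar>) \<le> rdist A B"
  unfolding rdist_def by (rule SUP_upper2[of \<pi>]) (use assms in auto)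

lemma LPgap_nonneg: "0 \<le> LPgapMin A B"
  unfolding LPgapMin_def by (rule Inf_greatest) auto

lemma LPgap_ge:
  assumes "\<And>e. 0 \<le> e \<Longrightarrow> (\<forall>c::real^'n. (\<forall>i. 0 \<le> c$i) \<longrightarrow>
         Inf ((\<lambda>a. c \<bullet> a) ` A) \<le> (1 + e) * Inf ((\<lambda>b. c \<bullet> b) ` B)) \<Longrightarrow> t \<le> ereal e"
  shows "t \<le> LPgapMin A B"
  unfolding LPgapMin_def by (rule Inf_greatest) (use assms in auto)

lemma LPgap_less:
  assumes "ereal e < LPgapMin A B" "0 \<le> e"
  shows "\<exists>c::real^'n. (\<forall>i. 0 \<le> c$i) \<and> \<not> Inf ((\<lambda>a. c \<bullet> a) ` A) \<le> (1 + e) * Inf ((\<lambda>b. c \<bullet> b) ` B)"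
proof (rule ccontr)
  assume "\<not> ?thesis"
  then have "LPgapMin A B \<le> ereal e" unfolding LPgapMin_def
    by (intro Inf_lower) (use assms(2) in auto)
  then show False using assms(1) by simp
qed

lemma inner_nonneg_vec:
  fixes c x :: "real^'n"
  assumes "\<And>i. 0 \<le> c$i" "\<And>i. 0 \<le> x$i" shows "0 \<le> c \<bullet> x"
  unfolding inner_vec_def using assms by (auto intro!: sum_nonneg)

lemma inner_mono_vec:
  fixes c x y :: "real^'n"
  assumes "\<And>i. 0 \<le> c$i" "\<And>i. x$i \<le> y$i" shows "c \<bullet> x \<le> c \<bullet> y"
  unfolding inner_vec_def using assms by (auto intro!: sum_mono mult_left_mono)

lemma inner_mono_vec2:
  fixes c d x :: "real^'n"
  assumes "\<And>i. c$i \<le> d$i" "\<And>i. 0 \<le> x$i" shows "c \<bullet> x \<le> d \<bullet> x"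
  unfolding inner_vec_def using assms by (auto intro!: sum_mono mult_right_mono)

locale thm6 =
  fixes A B :: "(real^'n) set" and V :: "(real^'n) set"
  assumes Vne: "V \<noteq> {}" and V01: "V \<subseteq> {x. \<forall>i. x$i = 0 \<or> x$i = 1}"
    and AV: "A = convex hull V"
    and up: "up_closed A" and convB: "convex B" and Bc: "B \<subseteq> unit_cube"
    and AB: "A \<subseteq> B" and dimAB: "aff_dim A = aff_dim B"
begin

definition S :: "'n set" where "S = {i. \<exists>v\<in>V. v$i = 0}"

lemma convex_cube: "convex (unit_cube :: (real^'n) set)"
  unfolding convex_def unit_cube_def
proof (clarsimp)
  fix x y :: "real^'n" and u v :: real and i
  assume h: "\<forall>i. 0 \<le> x $ i \<and> x $ i \<le> 1" "\<forall>i. 0 \<le> y $ i \<and> y $ i \<le> 1" "0 \<le> u" "0 \<le> v" "u + v = 1"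
  have "u * x $ i \<le> u" "v * y $ i \<le> v" using h by (auto intro: mult_left_le)
  then show "u * x $ i + v * y $ i \<le> 1" using h by linarith
qed

lemma A_cube: "A \<subseteq> unit_cube" using AB Bc by blast

lemma V_A: "V \<subseteq> A" unfolding AV by (rule hull_subset)

lemma Ane: "A \<noteq> {}" using Vne V_A by blast

lemma lower_V:
  assumes "\<And>v. v \<in> V \<Longrightarrow> t \<le> c \<bullet> v" and "a \<in> A"
  shows "t \<le> c \<bullet> a"
proof -
  have "A \<subseteq> {x. c \<bullet> x \<ge> t}" unfolding AV
    by (rule hull_minimal) (use assms(1) convex_halfspace_ge in auto)
  then show ?thesis using assms(2) by auto
qed

lemma off_S: assumes "a \<in> A" "j \<notin> S" shows "a$j = 1"
proof -
  have "A \<subseteq> {x. axis j 1 \<bullet> x = 1}" unfolding AV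
  proof (rule hull_minimal)
    show "V \<subseteq> {x. axis j 1 \<bullet> x = 1}" using assms(2) V01 unfolding S_def
      by (auto simp: inner_axis')
    show "convex {x. axis j 1 \<bullet> x = 1}" by (rule convex_hyperplane)
  qed
  then show ?thesis using assms(1) by (auto simp: inner_axis')
qed

lemma up_rule: assumes "a \<in> A" "y \<in> unit_cube" "\<And>i. a$i \<le> y$i" shows "y \<in> A"
  using up assms unfolding up_closed_def by blast

lemma ones_cube: "ones \<in> unit_cube" by (simp add: ones_def unit_cube_def)

lemma ones_A: "ones \<in> A"
proof -
  obtain v where "v \<in> V" using Vne by blast
  then have "v \<in> A" "v \<in> unit_cube" using V_A A_cube by auto
  then show ?thesis by (intro up_rule[OF \<open>v\<in>A\<close> ones_cube]) (auto simp: ones_def unit_cube_def)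
qed

lemma ev_A: assumes "i \<in> S" shows "ev i \<in> A"
proof -
  obtain v where v: "v \<in> V" "v$i = 0" using assms unfolding S_def by blast
  then have "v \<in> A" "v \<in> unit_cube" using V_A A_cube by auto
  then show ?thesis using v
    by (intro up_rule[OF \<open>v\<in>A\<close>]) (auto simp: ev_def unit_cube_def)
qed

lemma indep_neg_axis: "independent ((\<lambda>i. axis i (-1::real)) ` (X::'n set))"
proof -
  have "independent ((\<lambda>i. axis i (1::real)) ` X)"
    by (rule independent_mono[OF independent_Basis]) auto
  then have "independent (uminus ` (\<lambda>i. axis i (1::real)) ` X)"
    by (rule linear_independent_injective_image[OF linear_uminus]) (auto intro: inj_onI)
  moreover have "uminus ` (\<lambda>i. axis i (1::real)) ` X = (\<lambda>i. axis i (-1::real)) ` X"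
    by (auto simp: image_image axis_def vec_eq_iff)
  ultimately show ?thesis by simp
qed

lemma card_S_le: "int (card S) \<le> aff_dim A"
proof -
  have nin: "ones \<notin> ev ` S"
  proof
    assume "ones \<in> ev ` S"
    then obtain i :: 'n where "ones = ev i" by blast
    then have "ones $ i = ev i $ i" by simp
    then show False by (simp add: ones_def ev_def)
  qed
  have inj: "inj_on ev S" by (auto intro!: inj_onI simp: ev_def vec_eq_iff) (metis zero_neq_one)
  have img: "(\<lambda>x. - ones + x) ` ev ` S = (\<lambda>i. axis i (-1::real)) ` S"
    by (auto simp: image_image ones_def ev_def axis_def vec_eq_iff intro!: image_cong)
  have "\<not> affine_dependent (insert ones (ev ` S))"
    using affine_dependent_iff_dependent[OF nin] img indep_neg_axis by simp
  moreover have "insert ones (ev ` S) \<subseteq> A" using ones_A ev_A by auto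
  ultimately have "int (card (insert ones (ev ` S))) \<le> aff_dim A + 1"
    using independent_card_le_aff_dim by blast
  moreover have "card (insert ones (ev ` S)) = card S + 1"
    using nin inj by (simp add: card_image)
  ultimately show ?thesis by simp
qed

lemma off_S_B: assumes "b \<in> B" "j \<notin> S" shows "b$j = 1"
proof -
  have "affine hull A = affine hull B" using aff_dim_eq_full_gen[OF AB] dimAB by simp
  moreover have "affine hull A \<subseteq> {x. axis j 1 \<bullet> x = 1}"
  proof (rule hull_minimal)
    show "affine {x. axis j 1 \<bullet> x = (1::real)}" by (rule affine_hyperplane)
    show "A \<subseteq> {x. axis j 1 \<bullet> x = 1}" using off_S[OF _ assms(2)] by (auto simp: inner_axis')
  qed
  moreover have "b \<in> affine hull B" using assms(1) by (rule hull_inc)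
  ultimately show ?thesis by (auto simp: inner_axis')
qed

lemma B_cube: "b \<in> B \<Longrightarrow> 0 \<le> b$i \<and> b$i \<le> 1" using Bc unfolding unit_cube_def by blast
lemma A_cube': "a \<in> A \<Longrightarrow> 0 \<le> a$i \<and> a$i \<le> 1" using A_cube unfolding unit_cube_def by blast

lemma dim1: assumes "aff_dim A = 1" shows "A = B"
proof -
  have c: "card S \<le> 1" using card_S_le assms by simp
  have "S \<noteq> {}"
  proof
    assume "S = {}"
    then have "A \<subseteq> {ones}" using off_S by (auto simp: ones_def vec_eq_iff)
    then have "A = {ones}" using ones_A by auto
    then show False using assms by simp
  qed
  then have "card S = 1" using c by (simp add: card_gt_0_iff Suc_leI le_antisym)
  then obtain i where Si: "S = {i}" by (rule card_1_singletonE)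
  show ?thesis
  proof
    show "B \<subseteq> A"
    proof
      fix b assume b: "b \<in> B"
      show "b \<in> A"
      proof (rule up_rule[OF ev_A])
        show "i \<in> S" using Si by simp
        show "b \<in> unit_cube" using b Bc by auto
        fix j show "ev i $ j \<le> b $ j"
          using off_S_B[OF b, of j] B_cube[OF b, of j] Si by (auto simp: ev_def)
      qed
    qed
  qed (rule AB)
qed

lemma rdist_nonneg: "0 \<le> rdist A B"
proof -
  have "0 \<le> rfrac (SUP b\<in>B. INF a\<in>A. ereal \<bar>(\<lambda>x. 0::real) b - (\<lambda>x. 0) a\<bar>) (SUP a\<in>A. SUP a'\<in>A. ereal \<bar>(\<lambda>x. 0::real) a - (\<lambda>x. 0) a'\<bar>)"
    using Ane AB by (simp add: rfrac_def)
  also have "\<dots> \<le> rdist A B" by (rule rdist_ge) (simp add: linear_zero)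
  finally show ?thesis .
qed



lemma bdd_img: assumes "\<And>i. 0 \<le> c$i" shows "bdd_below ((\<lambda>a. c \<bullet> a) ` A)" "bdd_below ((\<lambda>b. c \<bullet> b) ` B)"
proof -
  show "bdd_below ((\<lambda>a. c \<bullet> a) ` A)"
    by (rule bdd_belowI[of _ 0]) (auto intro!: inner_nonneg_vec assms dest: A_cube')
  show "bdd_below ((\<lambda>b. c \<bullet> b) ` B)"
    by (rule bdd_belowI[of _ 0]) (auto intro!: inner_nonneg_vec assms dest: B_cube)
qed

lemma Bne: "B \<noteq> {}" using Ane AB by blast

lemma split_H:
  assumes "\<And>j. j \<notin> S \<Longrightarrow> x$j = 1"
  shows "c \<bullet> x = (\<chi> j. if j \<in> S then c$j else 0) \<bullet> x + (\<Sum>j\<in>UNIV. if j \<in> S then 0 else c$j)"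
  unfolding inner_vec_def using assms by (auto simp: sum.distrib[symmetric] intro!: sum.cong)

lemma core1:
  assumes c0: "\<And>i. 0 \<le> c$i" and e0: "0 \<le> e"
    and viol: "\<not> Inf ((\<lambda>a. c \<bullet> a) ` A) \<le> (1 + e) * Inf ((\<lambda>b. c \<bullet> b) ` B)"
    and d2: "2 \<le> aff_dim A"
  shows "ereal (e / (1 + e) / (real_of_int (aff_dim A) - 1)) \<le> rdist A B"
proof -
  define D where "D = real_of_int (aff_dim A) - 1"
  have D1: "1 \<le> D" using d2 by (simp add: D_def)
  define mA where "mA = Inf ((\<lambda>a. c \<bullet> a) ` A)"
  define mB where "mB = Inf ((\<lambda>b. c \<bullet> b) ` B)"
  define K where "K = (\<Sum>j\<in>UNIV. if j \<in> S then 0 else c$j)"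
  define c0v :: "real^'n" where "c0v = (\<chi> j. if j \<in> S then c$j else 0)"
  have K0: "0 \<le> K" unfolding K_def using c0 by (auto intro: sum_nonneg)
  have c0v0: "\<And>i. 0 \<le> c0v$i" using c0 by (simp add: c0v_def)
  have splA: "c \<bullet> a = c0v \<bullet> a + K" if "a \<in> A" for a
    unfolding c0v_def K_def by (rule split_H) (use off_S that in auto)
  have splB: "c \<bullet> b = c0v \<bullet> b + K" if "b \<in> B" for b
    unfolding c0v_def K_def by (rule split_H) (use off_S_B that in auto)
  have mBK: "K \<le> mB" unfolding mB_def
  proof (rule cInf_greatest)
    show "(\<lambda>b. c \<bullet> b) ` B \<noteq> {}" using Bne by simp
    fix y assume "y \<in> (\<lambda>b. c \<bullet> b) ` B"
    then obtain b where b: "b \<in> B" "y = c \<bullet> b" by blast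
    have "0 \<le> c0v \<bullet> b" by (rule inner_nonneg_vec) (use c0v0 B_cube[OF b(1)] in auto)
    then show "K \<le> y" using splB[OF b(1)] b(2) by simp
  qed
  define m where "m = mA - K"
  have mlow: "m \<le> c0v \<bullet> a" if "a \<in> A" for a
  proof -
    have "mA \<le> c \<bullet> a" unfolding mA_def by (rule cInf_lower) (use that bdd_img[OF c0] in auto)
    then show ?thesis using splA[OF that] by (simp add: m_def)
  qed
  define \<beta> where "\<beta> = mB - K"
  have \<beta>0: "0 \<le> \<beta>" using mBK by (simp add: \<beta>_def)
  have vi: "(1 + e) * mB < mA" using viol by (simp add: mA_def mB_def)
  have mb: "(1 + e) * \<beta> < m"
  proof -
    have "(1 + e) * \<beta> = (1 + e) * mB - K - e * K" by (simp add: \<beta>_def algebra_simps)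
    also have "\<dots> \<le> (1 + e) * mB - K" using e0 K0 by simp
    finally show ?thesis using vi by (simp add: m_def)
  qed
  have mpos: "0 < m" using mb \<beta>0 e0 by (smt (verit) mult_nonneg_nonneg)
  define c' :: "real^'n" where "c' = (\<chi> j. if j \<in> S then min (c$j) m else 0)"
  have c'0: "\<And>i. 0 \<le> c'$i" using c0 mpos by (simp add: c'_def)
  have c'le: "\<And>i. c'$i \<le> c0v$i" by (simp add: c'_def c0v_def)
  have c'low: "m \<le> c' \<bullet> a" if "a \<in> A" for a
  proof (rule lower_V[OF _ that])
    fix v assume v: "v \<in> V"
    show "m \<le> c' \<bullet> v"
    proof (cases "\<exists>i\<in>S. v$i = 1 \<and> m \<le> c$i")
      case True
      then obtain i where i: "i \<in> S" "v$i = 1" "m \<le> c$i" by blast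
      have "c'$i * v$i \<le> (\<Sum>j\<in>UNIV. c'$j * v$j)"
        by (rule member_le_sum) (use c'0 A_cube' V_A v in \<open>auto intro!: mult_nonneg_nonneg\<close>)
      moreover have "c'$i * v$i = m" using i by (simp add: c'_def)
      ultimately show ?thesis by (simp add: inner_vec_def)
    next
      case False
      have "c' \<bullet> v = c0v \<bullet> v" unfolding inner_vec_def inner_real_def
      proof (rule sum.cong[OF refl])
        fix j
        show "c' $ j * v $ j = c0v $ j * v $ j"
        proof -
          have vj: "v$j = 0 \<or> v$j = 1" using V01 v by blast
          show ?thesis using False vj by (cases "j \<in> S") (auto simp: c'_def c0v_def)
        qed
      qed
      then show ?thesis using mlow[of v] v V_A by auto
    qed
  qed
  have k: "real (card S) \<le> D + 1" using card_S_le by (simp add: D_def)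
  have c'ones: "c' \<bullet> ones \<le> (D + 1) * m"
  proof -
    have "c' \<bullet> ones = (\<Sum>j\<in>UNIV. if j \<in> S then min (c$j) m else 0)"
      by (simp add: inner_vec_def c'_def ones_def)
    also have "\<dots> = (\<Sum>j\<in>S. min (c$j) m)" by (simp add: sum.If_cases)
    also have "\<dots> \<le> (\<Sum>j\<in>S. m)" by (rule sum_mono) simp
    also have "\<dots> = real (card S) * m" by simp
    also have "\<dots> \<le> (D + 1) * m" using k mpos by (simp add: mult_right_mono)
    finally show ?thesis .
  qed
  have c'up: "c' \<bullet> a \<le> c' \<bullet> ones" if "a \<in> A" for a
    by (rule inner_mono_vec) (use c'0 A_cube'[OF that] in \<open>auto simp: ones_def\<close>)
  have width: "\<bar>c' \<bullet> a - c' \<bullet> a'\<bar> \<le> D * m" if "a \<in> A" "a' \<in> A" for a a'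
    using c'up[OF that(1)] c'up[OF that(2)] c'low[OF that(1)] c'low[OF that(2)] c'ones
    by (auto simp: algebra_simps)
  define \<delta> where "\<delta> = m / (1 + e) - \<beta>"
  have \<delta>0: "0 < \<delta>" using mb e0 by (simp add: \<delta>_def field_simps)
  have "mB < mB + \<delta>" using \<delta>0 by simp
  then obtain b where b: "b \<in> B" "c \<bullet> b < mB + \<delta>"
    using cInf_lessD[of "(\<lambda>b. c \<bullet> b) ` B" "mB + \<delta>"] Bne unfolding mB_def by auto
  have cb: "c' \<bullet> b < m / (1 + e)"
  proof -
    have "c' \<bullet> b \<le> c0v \<bullet> b" by (rule inner_mono_vec2) (use c'le B_cube[OF b(1)] in auto)
    then show ?thesis using b splB[OF b(1)] by (simp add: \<delta>_def \<beta>_def)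
  qed
  define \<eta> where "\<eta> = m - m / (1 + e)"
  have \<eta>eq: "\<eta> = m * e / (1 + e)" using e0 by (simp add: \<eta>_def field_simps)
  have \<eta>0: "0 \<le> \<eta>" using \<eta>eq mpos e0 by simp
  have Nge: "ereal \<eta> \<le> (SUP b\<in>B. INF a\<in>A. ereal \<bar>c' \<bullet> b - c' \<bullet> a\<bar>)"
  proof (rule SUP_upper2[OF b(1)], rule INF_greatest)
    fix a assume a: "a \<in> A"
    show "ereal \<eta> \<le> ereal \<bar>c' \<bullet> b - c' \<bullet> a\<bar>" using c'low[OF a] cb by (simp add: \<eta>_def)
  qed
  have Wle: "(SUP a\<in>A. SUP a'\<in>A. ereal \<bar>c' \<bullet> a - c' \<bullet> a'\<bar>) \<le> ereal (D * m)"
    by (intro SUP_least) (use width in auto)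
  have W0: "0 \<le> (SUP a\<in>A. SUP a'\<in>A. ereal \<bar>c' \<bullet> a - c' \<bullet> a'\<bar>)"
    using ones_A by (intro SUP_upper2[OF ones_A] SUP_upper2[OF ones_A]) simp
  define N where "N = (SUP b\<in>B. INF a\<in>A. ereal \<bar>c' \<bullet> b - c' \<bullet> a\<bar>)"
  define W where "W = (SUP a\<in>A. SUP a'\<in>A. ereal \<bar>c' \<bullet> a - c' \<bullet> a'\<bar>)"
  have main: "ereal (e / (1 + e) / D) \<le> rfrac N W"
  proof (cases "e = 0")
    case True
    have N0: "0 \<le> N" using order_trans[OF _ Nge, of 0] \<eta>0 by (simp add: N_def)
    then have "0 \<le> rfrac N W" using rfrac_nonneg[of N W] W0 by (simp add: W_def)
    then show ?thesis using True by (simp add: zero_ereal_def)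
  next
    case False
    then have epos: "0 < e" using e0 by simp
    then have \<eta>pos: "0 < \<eta>" using \<eta>eq mpos by simp
    have Npos: "0 < N" using Nge \<eta>pos unfolding N_def by (meson ereal_less(2) less_le_trans)
    show ?thesis
    proof (cases "W = 0")
      case True
      then show ?thesis using Npos by (auto simp: rfrac_def)
    next
      case False
      have Wl: "W \<le> ereal (D * m)" "0 \<le> W" using Wle W0 by (simp_all add: W_def)
      obtain w where w1: "W = ereal w" using Wl by (cases W) auto
      have w: "W = ereal w" "0 < w" "w \<le> D * m" using w1 Wl False by auto
      have "ereal (e / (1 + e) / D) = ereal (\<eta> / (D * m))"
      proof -
        have "1 + e \<noteq> 0" "D \<noteq> 0" "m \<noteq> 0" using e0 D1 mpos by auto
        then show ?thesis by (simp add: \<eta>eq)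
      qed
      also have "\<dots> \<le> ereal (\<eta> / w)" using w \<eta>0 by (simp add: frac_le)
      also have "\<dots> = ereal \<eta> / ereal w" using w by (simp add: ereal_divide)
      also have "\<dots> \<le> N / ereal w" using Nge w by (intro ereal_divide_right_mono) (auto simp: N_def)
      finally show ?thesis using w by (simp add: rfrac_def)
    qed
  qed
  also have "\<dots> \<le> rdist A B" unfolding N_def W_def by (rule rdist_ge[OF linear_inner])
  finally show ?thesis by (simp add: D_def)
qed


definition good :: "real \<Rightarrow> bool" where
  "good e \<longleftrightarrow> 0 \<le> e \<and> (\<forall>c::real^'n. (\<forall>i. 0 \<le> c$i) \<longrightarrow>
         Inf ((\<lambda>a. c \<bullet> a) ` A) \<le> (1 + e) * Inf ((\<lambda>b. c \<bullet> b) ` B))"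

lemma core2_below:
  assumes b: "b \<in> B" and gap: "\<And>a. a \<in> A \<Longrightarrow> x * w < p \<bullet> a - p \<bullet> b"
    and wb: "\<And>a a'. a \<in> A \<Longrightarrow> a' \<in> A \<Longrightarrow> \<bar>p \<bullet> a - p \<bullet> a'\<bar> \<le> w"
    and w0: "0 < w" and x0: "0 \<le> x" and d2: "2 \<le> aff_dim A"
  shows "x \<le> real_of_int (aff_dim A) - 1 \<and>
         (\<forall>e. good e \<longrightarrow> real_of_int (aff_dim A) - 1 \<le> (1 + e) * (real_of_int (aff_dim A) - 1 - x))"
proof -
  define D where "D = real_of_int (aff_dim A) - 1"
  have D1: "1 \<le> D" using d2 by (simp add: D_def)
  define c :: "real^'n" where "c = (\<chi> j. if j \<in> S then max (p$j) 0 else 0)"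
  define L where "L = (\<Sum>j\<in>UNIV. if j \<in> S then min (p$j) 0 else p$j)"
  define star :: "real^'n \<Rightarrow> real^'n" where "star a = (\<chi> j. if j \<in> S \<and> p$j < 0 then 1 else a$j)" for a
  have c0: "\<And>i. 0 \<le> c$i" by (simp add: c_def)
  have star_A: "star a \<in> A" if "a \<in> A" for a
  proof (rule up_rule[OF that])
    show "star a \<in> unit_cube" using A_cube'[OF that] by (auto simp: unit_cube_def star_def)
    fix i show "a$i \<le> star a $ i" using A_cube'[OF that, of i] by (auto simp: star_def)
  qed
  have pstar: "p \<bullet> star a = c \<bullet> a + L" if "a \<in> A" for a
    unfolding inner_vec_def inner_real_def L_def sum.distrib[symmetric]
  proof (rule sum.cong[OF refl])
    fix j
    show "p $ j * star a $ j = c $ j * a $ j + (if j \<in> S then min (p $ j) 0 else p $ j)"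
      using off_S[OF that, of j] by (cases "j \<in> S"; cases "p$j < 0") (auto simp: c_def star_def)
  qed
  have pb: "c \<bullet> b + L \<le> p \<bullet> b"
    unfolding inner_vec_def inner_real_def L_def sum.distrib[symmetric]
  proof (rule sum_mono)
    fix j
    show "c $ j * b $ j + (if j \<in> S then min (p $ j) 0 else p $ j) \<le> p $ j * b $ j"
      using off_S_B[OF b, of j] B_cube[OF b, of j]
      by (cases "j \<in> S"; cases "p$j < 0") (auto simp: c_def mult_left_le_one_le mult_le_cancel_left1)
  qed
  have key1: "c \<bullet> b + x * w < c \<bullet> a" if "a \<in> A" for a
    using gap[OF star_A[OF that]] pstar[OF that] pb by linarith
  define m where "m = Inf ((\<lambda>a. c \<bullet> a) ` A)"
  have mlow: "c \<bullet> b + x * w \<le> m" unfolding m_def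
    by (rule cInf_greatest) (use Ane key1 in \<open>auto intro: less_imp_le\<close>)
  have mle: "m \<le> c \<bullet> a" if "a \<in> A" for a
    unfolding m_def by (rule cInf_lower) (use that bdd_img[OF c0] in auto)
  have star1: "star ones = ones" by (simp add: star_def ones_def vec_eq_iff)
  have pones: "p \<bullet> ones = c \<bullet> ones + L" using pstar[OF ones_A] star1 by simp
  have mw: "c \<bullet> ones - w \<le> m" unfolding m_def
  proof (rule cInf_greatest)
    show "(\<lambda>a. c \<bullet> a) ` A \<noteq> {}" using Ane by simp
    fix y assume "y \<in> (\<lambda>a. c \<bullet> a) ` A"
    then obtain a where a: "a \<in> A" "y = c \<bullet> a" by blast
    have "\<bar>p \<bullet> ones - p \<bullet> star a\<bar> \<le> w" by (rule wb[OF ones_A star_A[OF a(1)]])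
    then show "c \<bullet> ones - w \<le> y" using pstar[OF a(1)] pones a(2) by linarith
  qed
  have mev: "m \<le> c \<bullet> ones - c$i" if "i \<in> S" for i
  proof -
    have "ones - ev i = axis i 1" by (simp add: ones_def ev_def axis_def vec_eq_iff)
    then have "c \<bullet> ones - c \<bullet> ev i = c$i" by (metis inner_diff_right inner_axis real_inner_1_right)
    then show ?thesis using mle[OF ev_A[OF that]] by simp
  qed
  have sumS: "c \<bullet> ones = (\<Sum>i\<in>S. c$i)"
  proof -
    have "c \<bullet> ones = (\<Sum>j\<in>UNIV. if j \<in> S then c$j else 0)"
      unfolding inner_vec_def by (rule sum.cong[OF refl]) (simp add: ones_def c_def)
    also have "\<dots> = (\<Sum>i\<in>S. c$i)" by (simp add: sum.If_cases)
    finally show ?thesis .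
  qed
  define k where "k = real (card S)"
  have kD: "k \<le> D + 1" using card_S_le by (simp add: k_def D_def)
  have kk: "k * m \<le> (k - 1) * (c \<bullet> ones)"
  proof -
    have "k * m = (\<Sum>i\<in>S. m)" by (simp add: k_def)
    also have "\<dots> \<le> (\<Sum>i\<in>S. c \<bullet> ones - c$i)" by (rule sum_mono) (rule mev)
    also have "\<dots> = k * (c \<bullet> ones) - c \<bullet> ones" by (simp add: sum_subtractf sumS k_def)
    finally show ?thesis by (simp add: algebra_simps)
  qed
  have mDw: "m \<le> D * w"
  proof (cases "S = {}")
    case True
    then have "c \<bullet> ones = 0" using sumS by simp
    then show ?thesis using mle[OF ones_A] D1 w0 by (smt (verit) mult_nonneg_nonneg)
  next
    case False
    then have k1: "1 \<le> k" by (simp add: k_def Suc_leI card_gt_0_iff)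
    have "(k - 1) * (c \<bullet> ones - w) \<le> (k - 1) * m" using mw k1 by (intro mult_left_mono) auto
    then have "m \<le> (k - 1) * w" using kk by (simp add: algebra_simps)
    also have "\<dots> \<le> D * w" using kD w0 by (intro mult_right_mono) auto
    finally show ?thesis .
  qed
  define \<beta> where "\<beta> = c \<bullet> b"
  have \<beta>0: "0 \<le> \<beta>" unfolding \<beta>_def by (rule inner_nonneg_vec) (use c0 B_cube[OF b] in auto)
  have xD: "x \<le> D"
  proof (cases "x = 0")
    case True then show ?thesis using D1 by simp
  next
    case False
    have "x * w \<le> D * w" using mlow mDw \<beta>0 by (simp add: \<beta>_def)
    then show ?thesis using w0 by simp
  qed
  have eD: "D \<le> (1 + e) * (D - x)" if g: "good e" for e
  proof -
    have e0: "0 \<le> e" using g by (simp add: good_def)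
    have "m \<le> (1 + e) * Inf ((\<lambda>b. c \<bullet> b) ` B)" using g c0 by (simp add: good_def m_def)
    also have "\<dots> \<le> (1 + e) * \<beta>" unfolding \<beta>_def
      by (intro mult_left_mono cInf_lower) (use b bdd_img[OF c0] e0 in auto)
    finally have mb: "m \<le> (1 + e) * \<beta>" .
    show ?thesis
    proof (cases "x = 0")
      case True then show ?thesis using e0 D1 by simp
    next
      case False
      then have mpos: "0 < m" using mlow \<beta>0 x0 w0 by (smt (verit) \<beta>_def mult_pos_pos)
      have h1: "D * (\<beta> + x * w) \<le> D * m" using mlow D1 by (intro mult_left_mono) (auto simp: \<beta>_def)
      have h2: "x * m \<le> x * (D * w)" using mDw x0 by (intro mult_left_mono) auto
      have h3: "(D - x) * m \<ge> D * \<beta>" using h1 h2 by (simp add: algebra_simps)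
      have "D * m \<le> D * ((1 + e) * \<beta>)" using mb D1 by (intro mult_left_mono) auto
      also have "\<dots> = (1 + e) * (D * \<beta>)" by simp
      also have "\<dots> \<le> (1 + e) * ((D - x) * m)" using h3 e0 by (intro mult_left_mono) auto
      finally have "D * m \<le> ((1 + e) * (D - x)) * m" by (simp add: algebra_simps)
      then show ?thesis using mpos by simp
    qed
  qed
  show ?thesis using xD eD by (simp add: D_def)
qed


lemma convA: "convex A" unfolding AV by (rule convex_convex_hull)

lemma seg:
  assumes pos: "\<And>a. a \<in> A \<Longrightarrow> 0 < \<bar>q \<bullet> b - q \<bullet> a\<bar>" and lt: "q \<bullet> b < q \<bullet> ones" and a: "a \<in> A"
  shows "q \<bullet> b < q \<bullet> a"
proof (rule ccontr)
  assume "\<not> ?thesis"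
  then have ab: "q \<bullet> a \<le> q \<bullet> b" by simp
  define t where "t = (q \<bullet> b - q \<bullet> a) / (q \<bullet> ones - q \<bullet> a)"
  have dpos: "0 < q \<bullet> ones - q \<bullet> a" using ab lt by simp
  have t0: "0 \<le> t" "t \<le> 1" using ab lt dpos by (auto simp: t_def field_simps)
  define z where "z = (1 - t) *\<^sub>R a + t *\<^sub>R ones"
  have zA: "z \<in> A" unfolding z_def by (rule convexD[OF convA a ones_A]) (use t0 in auto)
  have "q \<bullet> z = q \<bullet> a + t * (q \<bullet> ones - q \<bullet> a)" by (simp add: z_def inner_add_right algebra_simps)
  also have "\<dots> = q \<bullet> b" using dpos by (simp add: t_def)
  finally show False using pos[OF zA] by simp
qed

lemma core2:
  assumes lin: "linear \<pi>" and x0: "0 \<le> x" and d2: "2 \<le> aff_dim A"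
    and lt: "ereal x < rfrac (SUP b\<in>B. INF a\<in>A. ereal \<bar>\<pi> b - \<pi> a\<bar>) (SUP a\<in>A. SUP a'\<in>A. ereal \<bar>\<pi> a - \<pi> a'\<bar>)"
  shows "x \<le> real_of_int (aff_dim A) - 1 \<and>
         (\<forall>e. good e \<longrightarrow> real_of_int (aff_dim A) - 1 \<le> (1 + e) * (real_of_int (aff_dim A) - 1 - x))"
proof -
  define p :: "real^'n" where "p = (\<chi> i. \<pi> (axis i 1))"
  have peq: "\<pi> y = p \<bullet> y" for y unfolding p_def by (rule linear_rep[OF lin])
  define N where "N = (SUP b\<in>B. INF a\<in>A. ereal \<bar>\<pi> b - \<pi> a\<bar>)"
  define W where "W = (SUP a\<in>A. SUP a'\<in>A. ereal \<bar>\<pi> a - \<pi> a'\<bar>)"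
  have lt': "ereal x < rfrac N W" using lt by (simp add: N_def W_def)
  have W0: "0 \<le> W" unfolding W_def by (intro SUP_upper2[OF ones_A] SUP_upper2[OF ones_A]) simp
  have N0: "0 \<le> N" unfolding N_def
  proof -
    obtain b where "b \<in> B" using Bne by blast
    then show "0 \<le> (SUP b\<in>B. INF a\<in>A. ereal \<bar>\<pi> b - \<pi> a\<bar>)"
      by (intro SUP_upper2[of b] INF_greatest) auto
  qed
  have wb: "ereal \<bar>\<pi> a - \<pi> a'\<bar> \<le> W" if "a \<in> A" "a' \<in> A" for a a'
    unfolding W_def by (intro SUP_upper2[OF that(1)] SUP_upper2[OF that(2)]) simp
  have Winf: "W \<noteq> \<infinity>"
  proof
    assume "W = \<infinity>"
    then show False using lt' x0 by (simp add: rfrac_def)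
  qed
  have Wn0: "W \<noteq> 0"
  proof
    assume W: "W = 0"
    have pS: "p$i = 0" if "i \<in> S" for i
    proof -
      have "ones - ev i = axis i 1" by (simp add: ones_def ev_def axis_def vec_eq_iff)
      then have "\<pi> ones - \<pi> (ev i) = p$i"
        by (metis peq inner_diff_right inner_axis real_inner_1_right)
      moreover have "ereal \<bar>\<pi> ones - \<pi> (ev i)\<bar> \<le> 0" using wb[OF ones_A ev_A[OF that]] W by simp
      ultimately show ?thesis by simp
    qed
    have pB: "\<pi> b = \<pi> ones" if "b \<in> B" for b
    proof -
      have "p \<bullet> b = p \<bullet> ones" unfolding inner_vec_def
        by (rule sum.cong[OF refl]) (use pS off_S_B[OF that] in \<open>force simp: ones_def\<close>)
      then show ?thesis by (simp add: peq)
    qed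
    have "N \<le> 0" unfolding N_def
    proof (rule SUP_least)
      fix b assume b: "b \<in> B"
      show "(INF a\<in>A. ereal \<bar>\<pi> b - \<pi> a\<bar>) \<le> 0"
        by (rule INF_lower2[OF ones_A]) (simp add: pB[OF b])
    qed
    then have "N = 0" using N0 by simp
    then show False using lt' x0 W by (simp add: rfrac_def)
  qed
  obtain w where w: "W = ereal w" using W0 Winf by (cases W) auto
  have wpos: "0 < w" using w W0 Wn0 by auto
  have rf: "rfrac N W = N / ereal w" using w wpos by (simp add: rfrac_def)
  have Nbig: "ereal (x * w) < N"
  proof (cases N)
    case (real n)
    then have "x < n / w" using lt' rf wpos by (simp add: ereal_divide)
    then show ?thesis using real wpos by (simp add: field_simps)
  next
    case PInf then show ?thesis by simp
  next
    case MInf then show ?thesis using N0 by simp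
  qed
  then obtain b where b: "b \<in> B" "ereal (x * w) < (INF a\<in>A. ereal \<bar>\<pi> b - \<pi> a\<bar>)"
    unfolding N_def by (auto simp: less_SUP_iff)
  have gapabs: "x * w < \<bar>p \<bullet> b - p \<bullet> a\<bar>" if "a \<in> A" for a
  proof -
    have "(INF a\<in>A. ereal \<bar>\<pi> b - \<pi> a\<bar>) \<le> ereal \<bar>\<pi> b - \<pi> a\<bar>" by (rule INF_lower[OF that])
    then have "ereal (x * w) < ereal \<bar>\<pi> b - \<pi> a\<bar>" using b(2) by (rule order.strict_trans2[rotated])
    then show ?thesis by (simp add: peq)
  qed
  have xw0: "0 \<le> x * w" using x0 wpos by simp
  have wb': "\<bar>q \<bullet> a - q \<bullet> a'\<bar> \<le> w" if "q = p \<or> q = - p" "a \<in> A" "a' \<in> A" for q a a'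
    using wb[OF that(2,3)] w that(1) by (auto simp: peq inner_minus_left)
  consider "p \<bullet> b < p \<bullet> ones" | "p \<bullet> ones < p \<bullet> b" | "p \<bullet> b = p \<bullet> ones" by linarith
  then show ?thesis
  proof cases
    case 1
    have "p \<bullet> b < p \<bullet> a" if "a \<in> A" for a
      by (rule seg[OF _ 1 that]) (use gapabs xw0 in \<open>fastforce\<close>)
    then have gap: "x * w < p \<bullet> a - p \<bullet> b" if "a \<in> A" for a using gapabs[OF that] that by fastforce
    show ?thesis by (rule core2_below[OF b(1) gap _ wpos x0 d2]) (use wb' in auto)
  next
    case 2
    have "(-p) \<bullet> b < (-p) \<bullet> a" if "a \<in> A" for a
      by (rule seg[OF _ _ that]) (use gapabs xw0 2 in \<open>fastforce simp: inner_minus_left\<close>)+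
    then have gap: "x * w < (-p) \<bullet> a - (-p) \<bullet> b" if "a \<in> A" for a
      using gapabs[OF that] that by (fastforce simp: inner_minus_left)
    show ?thesis by (rule core2_below[OF b(1) gap _ wpos x0 d2]) (use wb' in auto)
  next
    case 3
    then show ?thesis using gapabs[OF ones_A] xw0 by simp
  qed
qed


lemma dim_cases: "aff_dim A = 0 \<or> aff_dim A = 1 \<or> 2 \<le> aff_dim A"
  using aff_dim_geq[of A] aff_dim_empty[of A] Ane by linarith

lemma part_i:
  assumes ne1: "aff_dim A \<noteq> 1"
  shows "rdist A B \<ge> ereal (1 / (real_of_int (aff_dim A) - 1)) *
                (if LPgapMin A B = \<infinity> then 1 else LPgapMin A B / (1 + LPgapMin A B))"
proof -
  define g where "g = LPgapMin A B"
  have g0: "0 \<le> g" unfolding g_def by (rule LPgap_nonneg)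
  obtain \<tau> where \<tau>: "(if g = \<infinity> then 1 else g / (1 + g)) = ereal \<tau>" "0 \<le> \<tau>" "\<tau> \<le> 1"
    "g \<noteq> \<infinity> \<Longrightarrow> \<tau> = real_of_ereal g / (1 + real_of_ereal g)"
  proof (cases "g = \<infinity>")
    case True then show ?thesis using that[of 1] by simp
  next
    case False
    then obtain \<gamma> where \<gamma>: "g = ereal \<gamma>" using g0 by (cases g) auto
    then have \<gamma>0: "0 \<le> \<gamma>" using g0 by simp
    have e1: "1 + g = ereal (1 + \<gamma>)" using \<gamma> by simp
    have ne: "1 + \<gamma> \<noteq> 0" using \<gamma>0 by simp
    have "g / (1 + g) = ereal \<gamma> / ereal (1 + \<gamma>)" by (subst e1) (simp add: \<gamma>)
    also have "\<dots> = ereal (\<gamma> / (1 + \<gamma>))" using ne by (simp add: ereal_divide)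
    finally have "g / (1 + g) = ereal (\<gamma> / (1 + \<gamma>))" .
    note gq = this
    show ?thesis
    proof (rule that[of "\<gamma> / (1 + \<gamma>)"])
      show "(if g = \<infinity> then 1 else g / (1 + g)) = ereal (\<gamma> / (1 + \<gamma>))"
        using False gq by (simp only: if_False)
      show "0 \<le> \<gamma> / (1 + \<gamma>)" "\<gamma> / (1 + \<gamma>) \<le> 1" using \<gamma>0 by auto
      show "\<gamma> / (1 + \<gamma>) = real_of_ereal g / (1 + real_of_ereal g)" using \<gamma> by (simp only: real_of_ereal.simps)
    qed
  qed
  have \<tau>': "(if LPgapMin A B = \<infinity> then 1 else LPgapMin A B / (1 + LPgapMin A B)) = ereal \<tau>"
    using \<tau>(1) unfolding g_def .
  show ?thesis unfolding \<tau>'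
  proof (cases "aff_dim A = 0")
    case True
    have "ereal (1 / (real_of_int (aff_dim A) - 1)) * ereal \<tau> \<le> 0" using True \<tau>(2) by simp
    also have "\<dots> \<le> rdist A B" by (rule rdist_nonneg)
    finally show "ereal (1 / (real_of_int (aff_dim A) - 1)) * ereal \<tau> \<le> rdist A B" .
  next
    case False
    then have d2: "2 \<le> aff_dim A" using dim_cases ne1 by auto
    define D where "D = real_of_int (aff_dim A) - 1"
    have D1: "1 \<le> D" using d2 by (simp add: D_def)
    show "ereal (1 / (real_of_int (aff_dim A) - 1)) * ereal \<tau> \<le> rdist A B"
    proof (rule ccontr)
      assume "\<not> ?thesis"
      then have "rdist A B < ereal (1 / D) * ereal \<tau>" by (simp add: D_def not_le)
      then have less: "rdist A B < ereal (\<tau> / D)" by simp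
      obtain r where r: "rdist A B = ereal r" using less rdist_nonneg by (cases "rdist A B") auto
      have r0: "0 \<le> r" using rdist_nonneg r by simp
      define x where "x = r * D"
      have x0: "0 \<le> x" using r0 D1 by (simp add: x_def)
      have x\<tau>: "x < \<tau>" using less r D1 by (simp add: x_def field_simps)
      have x1: "x < 1" using x\<tau> \<tau>(3) by simp
      have "\<exists>e. x / (1 - x) < e \<and> ereal e < g"
      proof (cases "g = \<infinity>")
        case True then show ?thesis by (intro exI[of _ "x / (1 - x) + 1"]) simp
      next
        case False
        then obtain \<gamma> where \<gamma>: "g = ereal \<gamma>" using g0 by (cases g) auto
        then have \<gamma>0: "0 \<le> \<gamma>" using g0 by simp
        have "x < \<gamma> / (1 + \<gamma>)" using x\<tau> \<tau>(4) False \<gamma> by simp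
        then have "x * (1 + \<gamma>) < \<gamma>" using \<gamma>0 by (simp add: field_simps)
        then have "x / (1 - x) < \<gamma>" using x1 by (simp add: field_simps)
        moreover obtain q where q: "q = x / (1 - x)" by blast
        ultimately have "q < \<gamma>" by simp
        then have "q < (q + \<gamma>) / 2" "(q + \<gamma>) / 2 < \<gamma>" by (simp_all add: field_simps)
        then show ?thesis using \<gamma> q by (intro exI[of _ "(q + \<gamma>) / 2"]) simp
      qed
      then obtain e where e: "x / (1 - x) < e" "ereal e < g" by blast
      have e0: "0 \<le> e" using e(1) x0 x1 by (smt (verit) divide_nonneg_pos)
      have xe: "x < e / (1 + e)"
      proof -
        have "x < e * (1 - x)" using e(1) x1 by (simp add: field_simps)
        then show ?thesis using e0 by (simp add: field_simps)
      qed
      obtain c :: "real^'n" where c: "\<And>i. 0 \<le> c$i" "\<not> Inf ((\<lambda>a. c \<bullet> a) ` A) \<le> (1 + e) * Inf ((\<lambda>b. c \<bullet> b) ` B)"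
        using LPgap_less[of e A B] e(2) e0 by (auto simp: g_def)
      have "ereal (e / (1 + e) / D) \<le> rdist A B" using core1[OF c(1) e0 c(2) d2] by (simp add: D_def)
      then have "e / (1 + e) / D \<le> r" using r by simp
      then have "e / (1 + e) / D * D \<le> r * D" using D1 by (intro mult_right_mono) auto
      then have "e / (1 + e) \<le> x" using D1 by (simp add: x_def)
      then show False using xe by simp
    qed
  qed
qed

lemma part_ii:
  assumes ne1: "aff_dim A \<noteq> 1"
  shows "LPgapMin A B \<ge>
                (if rdist A B = ereal (real_of_int (aff_dim A) - 1) then \<infinity>
                 else rdist A B / (ereal (real_of_int (aff_dim A) - 1) - rdist A B))"
proof (cases "aff_dim A = 0")
  case True
  have r0: "0 \<le> rdist A B" by (rule rdist_nonneg)
  have "rdist A B / (ereal (-1) - rdist A B) \<le> 0"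
  proof (cases "rdist A B")
    case (real \<rho>)
    then have "0 \<le> \<rho>" using r0 by simp
    then show ?thesis using real by (simp add: ereal_divide divide_nonneg_neg)
  next
    case PInf then show ?thesis by simp
  next
    case MInf then show ?thesis using r0 by simp
  qed
  also have "\<dots> \<le> LPgapMin A B" by (rule LPgap_nonneg)
  finally have fin: "rdist A B / (ereal (-1) - rdist A B) \<le> LPgapMin A B" .
  have ne: "rdist A B \<noteq> ereal (real_of_int (aff_dim A) - 1)" using True r0 by auto
  have eq: "ereal (real_of_int (aff_dim A) - 1) = ereal (-1)" using True by simp
  show ?thesis using fin ne unfolding eq by (simp only: if_False)
next
  case False
  then have d2: "2 \<le> aff_dim A" using dim_cases ne1 by auto
  define D where "D = real_of_int (aff_dim A) - 1"
  have D1: "1 \<le> D" using d2 by (simp add: D_def)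
  define r where "r = rdist A B"
  have r0: "0 \<le> r" unfolding r_def by (rule rdist_nonneg)
  define RHS where "RHS = (if r = ereal D then \<infinity> else r / (ereal D - r))"
  show ?thesis
  proof (rule ccontr)
    assume nt: "\<not> ?thesis"
    have eqR: "(if rdist A B = ereal (real_of_int (aff_dim A) - 1) then \<infinity>
                 else rdist A B / (ereal (real_of_int (aff_dim A) - 1) - rdist A B)) = RHS"
      unfolding RHS_def r_def D_def by (rule refl)
    have "\<not> RHS \<le> LPgapMin A B" using nt unfolding eqR .
    then have less: "LPgapMin A B < RHS" by (simp only: not_le)
    obtain \<gamma> where \<gamma>: "LPgapMin A B = ereal \<gamma>" using less LPgap_nonneg[of A B] by (cases "LPgapMin A B") auto
    have \<gamma>0: "0 \<le> \<gamma>" using \<gamma> LPgap_nonneg[of A B] by simp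
    define x0 where "x0 = \<gamma> * D / (1 + \<gamma>)"
    have x00: "0 \<le> x0" using \<gamma>0 D1 by (simp add: x0_def)
    have x0D: "x0 < D" using \<gamma>0 D1 by (simp add: x0_def field_simps)
    have x0r: "ereal x0 < r"
    proof (cases "r = ereal D")
      case True then show ?thesis using x0D by simp
    next
      case False
      then have lessR: "ereal \<gamma> < r / (ereal D - r)" using less \<gamma> by (simp add: RHS_def)
      show ?thesis
      proof (cases r)
        case (real \<rho>)
        show ?thesis
        proof (cases "\<rho> < D")
          case True
          then have "\<gamma> < \<rho> / (D - \<rho>)" using lessR real by (simp add: ereal_divide)
          then have "\<gamma> * (D - \<rho>) < \<rho>" using True by (simp add: field_simps)
          then have "x0 < \<rho>" using \<gamma>0 by (simp add: x0_def field_simps)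
          then show ?thesis using real by simp
        next
          case nl: False
          then have "\<rho> \<noteq> D" using False real by simp
          then have "D < \<rho>" using nl by simp
          then have "\<rho> / (D - \<rho>) \<le> 0" using real r0 by (simp add: divide_nonneg_neg)
          then show ?thesis using lessR real \<gamma>0 \<open>D < \<rho>\<close> by (simp add: ereal_divide)
        qed
      next
        case PInf then show ?thesis by simp
      next
        case MInf then show ?thesis using r0 by simp
      qed
    qed
    then obtain \<pi> where \<pi>: "linear \<pi>" "ereal x0 < rfrac (SUP b\<in>B. INF a\<in>A. ereal \<bar>\<pi> b - \<pi> a\<bar>) (SUP a\<in>A. SUP a'\<in>A. ereal \<bar>\<pi> a - \<pi> a'\<bar>)"
      unfolding r_def rdist_def by (auto simp: less_SUP_iff)
    obtain x where x: "ereal x0 < ereal x" "ereal x < rfrac (SUP b\<in>B. INF a\<in>A. ereal \<bar>\<pi> b - \<pi> a\<bar>) (SUP a\<in>A. SUP a'\<in>A. ereal \<bar>\<pi> a - \<pi> a'\<bar>)"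
      using ereal_dense2[OF \<pi>(2)] by blast
    have xx0: "x0 < x" using x(1) by simp
    have x0': "0 \<le> x" using xx0 x00 by simp
    have C: "x \<le> D" "\<And>e. good e \<Longrightarrow> D \<le> (1 + e) * (D - x)"
      using core2[OF \<pi>(1) x0' d2 x(2)] by (auto simp: D_def)
    show False
    proof (cases "x = D")
      case True
      have "\<infinity> \<le> LPgapMin A B"
      proof (rule LPgap_ge)
        fix e :: real assume "0 \<le> e" "\<forall>c::real^'n. (\<forall>i. 0 \<le> c$i) \<longrightarrow>
         Inf ((\<lambda>a. c \<bullet> a) ` A) \<le> (1 + e) * Inf ((\<lambda>b. c \<bullet> b) ` B)"
        then have "good e" by (simp add: good_def)
        then show "\<infinity> \<le> ereal e" using C(2) True D1 by fastforce
      qed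
      then show False using \<gamma> by simp
    next
      case False
      then have xD: "x < D" using C(1) by simp
      have "ereal (x / (D - x)) \<le> LPgapMin A B"
      proof (rule LPgap_ge)
        fix e :: real assume "0 \<le> e" "\<forall>c::real^'n. (\<forall>i. 0 \<le> c$i) \<longrightarrow>
         Inf ((\<lambda>a. c \<bullet> a) ` A) \<le> (1 + e) * Inf ((\<lambda>b. c \<bullet> b) ` B)"
        then have "good e" by (simp add: good_def)
        then have "D \<le> (1 + e) * (D - x)" by (rule C(2))
        then have "x \<le> e * (D - x)" by (simp add: algebra_simps)
        then show "ereal (x / (D - x)) \<le> ereal e" using xD by (simp add: field_simps)
      qed
      then have "x / (D - x) \<le> \<gamma>" using \<gamma> by simp
      moreover have "\<gamma> < x / (D - x)"
      proof -
        have "\<gamma> * D < x * (1 + \<gamma>)" using xx0 \<gamma>0 by (simp add: x0_def field_simps)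
        then have "\<gamma> * (D - x) < x" by (simp add: algebra_simps)
        then show ?thesis using xD by (simp add: field_simps)
      qed
      ultimately show False by simp
    qed
  qed
qed

end

theorem mainTheorem6:
  fixes A B :: "(real^'n) set"
  assumes "zero_one_polytope A" and "up_closed A"
    and "convex B" and "B \<subseteq> unit_cube" and "A \<subseteq> B"
    and "aff_dim A = aff_dim B"
  shows "(aff_dim A = 1 \<longrightarrow> A = B) \<and>
         (aff_dim A \<noteq> 1 \<longrightarrow>
            rdist A B \<ge> ereal (1 / (real_of_int (aff_dim A) - 1)) *
                (if LPgapMin A B = \<infinity> then 1 else LPgapMin A B / (1 + LPgapMin A B))
          \<and> LPgapMin A B \<ge>
                (if rdist A B = ereal (real_of_int (aff_dim A) - 1) then \<infinity>
                 else rdist A B / (ereal (real_of_int (aff_dim A) - 1) - rdist A B)))"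
proof -
  obtain V where V: "V \<noteq> {}" "V \<subseteq> {x. \<forall>i. x$i = 0 \<or> x$i = 1}" "A = convex hull V"
    using assms(1) unfolding zero_one_polytope_def by blast
  interpret thm6 A B V
    by (rule thm6.intro[OF V(1) V(2) V(3) assms(2) assms(3) assms(4) assms(5) assms(6)])
  show ?thesis
  proof (intro conjI impI)
    show "aff_dim A = 1 \<Longrightarrow> A = B" by (rule dim1)
    show "aff_dim A \<noteq> 1 \<Longrightarrow> rdist A B \<ge> ereal (1 / (real_of_int (aff_dim A) - 1)) *
                (if LPgapMin A B = \<infinity> then 1 else LPgapMin A B / (1 + LPgapMin A B))"
      by (rule part_i)
    show "aff_dim A \<noteq> 1 \<Longrightarrow> LPgapMin A B \<ge>
                (if rdist A B = ereal (real_of_int (aff_dim A) - 1) then \<infinity>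
                 else rdist A B / (ereal (real_of_int (aff_dim A) - 1) - rdist A B))"
      by (rule part_ii)
  qed
qed

end
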